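(* Let $G=(V,E)$ be a finite, simple, undirected, loopless graph with at least one wedge. For each vertex $v$ let $N_1(v)$ be the closed neighborhood of $v$ (the set consisting of $v$ and all vertices adjacent to $v$), let $W_v$ be the set of wedges centered at $v$ (so $|W_v|=\binom{d_v}{2}$, where $d_v$ is the degree of $v$), let $W$ be the set of all wedges, and let $p_v=|W_v|/|W|$. Let $\mathrm{cut}(S)$ denote the number of edges with exactly one endpoint in $S\subseteq V$, and let $\kappa$ be the global clustering coefficient of $G$. Then $$\sum_{v\in V} p_v\,\frac{\mathrm{cut}(N_1(v))}{|W_v|} = 2(1-\kappa),$$ where each summand $p_v\,\mathrm{cut}(N_1(v))/|W_v|$ is interpreted as $\mathrm{cut}(N_1(v))/|W|$ (which coincides with the literal expression whenever $|W_v|>0$). Equivalently, $\sum_{v\in V}\mathrm{cut}(N_1(v)) = 2(1-\kappa)|W|$.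
   Context: A wedge is an unordered pair of distinct edges sharing an endpoint, $\{(s,t),(s,u)\}$; its center is $s$. The wedge is closed if the edge $(t,u)$ is in $E$, and open otherwise. The global clustering coefficient is $\kappa = (\text{number of closed wedges})/|W|$. *)

theory Defs
  imports Complex_Main
begin

definition simple_graph :: "'a set \<Rightarrow> 'a set set \<Rightarrow> bool" where
  "simple_graph V E \<longleftrightarrow> finite V \<and> (\<forall>e\<in>E. e \<subseteq> V \<and> card e = 2)"

definition adj :: "'a set set \<Rightarrow> 'a \<Rightarrow> 'a \<Rightarrow> bool" where
  "adj E u v \<longleftrightarrow> {u, v} \<in> E"

definition degree :: "'a set set \<Rightarrow> 'a \<Rightarrow> nat" where
  "degree E v = card {e\<in>E. v \<in> e}"

definition closed_nbhd :: "'a set \<Rightarrow> 'a set set \<Rightarrow> 'a \<Rightarrow> 'a set" where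
  "closed_nbhd V E v = insert v {u\<in>V. adj E v u}"

definition wedges_at :: "'a set set \<Rightarrow> 'a \<Rightarrow> 'a set set set" where
  "wedges_at E v = {{e1, e2} | e1 e2. e1 \<in> E \<and> e2 \<in> E \<and> e1 \<noteq> e2 \<and> v \<in> e1 \<and> v \<in> e2}"

(* all wedges (as pairs (centre, wedge)), so that |W| = sum over v of |W_v| *)
definition wedges :: "'a set \<Rightarrow> 'a set set \<Rightarrow> ('a \<times> 'a set set) set" where
  "wedges V E = {(v, w). v \<in> V \<and> w \<in> wedges_at E v}"

definition closed_wedge :: "'a set set \<Rightarrow> ('a \<times> 'a set set) \<Rightarrow> bool" where
  "closed_wedge E vw = (\<exists>t u. snd vw = {{fst vw, t}, {fst vw, u}} \<and> {t, u} \<in> E)"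

definition clustering_coeff :: "'a set \<Rightarrow> 'a set set \<Rightarrow> real" where
  "clustering_coeff V E =
     real (card {w \<in> wedges V E. closed_wedge E w}) / real (card (wedges V E))"

definition cut :: "'a set set \<Rightarrow> 'a set \<Rightarrow> nat" where
  "cut E S = card {e\<in>E. card (e \<inter> S) = 1}"

end

theory Submission
  imports Defs
begin

lemma edge_form:
  assumes "simple_graph V E" "e \<in> E" "x \<in> e"
  shows "\<exists>t. e = {x, t} \<and> t \<noteq> x \<and> t \<in> V \<and> x \<in> V"
proof -
  have c: "card e = 2" and s: "e \<subseteq> V" using assms unfolding simple_graph_def by auto
  then obtain a b where "e = {a, b}" "a \<noteq> b" by (meson card_2_iff)
  then show ?thesis using assms(3) s by auto
qed

lemma dbl: "{x,v} = {x,t} \<Longrightarrow> x \<noteq> v \<Longrightarrow> v = t"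
  by (metis doubleton_eq_iff)

lemma adj_irrefl: "simple_graph V E \<Longrightarrow> \<not> adj E x x"
  unfolding simple_graph_def adj_def by fastforce

lemma adj_sym: "adj E x y = adj E y x"
  unfolding adj_def by (simp add: insert_commute)

lemma adj_V: "simple_graph V E \<Longrightarrow> adj E x y \<Longrightarrow> x \<in> V \<and> y \<in> V"
  unfolding simple_graph_def adj_def by auto

lemma closed_iff:
  assumes G: "simple_graph V E" and "adj E x v" "adj E x y" "v \<noteq> y"
  shows "closed_wedge E (x, {{x,v},{x,y}}) \<longleftrightarrow> adj E v y"
proof
  assume "adj E v y" then show "closed_wedge E (x, {{x,v},{x,y}})"
    unfolding closed_wedge_def adj_def by auto
next
  assume "closed_wedge E (x, {{x,v},{x,y}})"
  then obtain t u where tu: "{{x,v},{x,y}} = {{x,t},{x,u}}" "{t,u} \<in> E"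
    unfolding closed_wedge_def by auto
  have xv: "x \<noteq> v" "x \<noteq> y" using assms adj_irrefl by metis+
  have "{x,t} \<in> {{x,v},{x,y}}" using tu(1) by auto
  then have "t = v \<or> t = y" using xv by (auto simp: doubleton_eq_iff)
  moreover have "{x,u} \<in> {{x,v},{x,y}}" using tu(1) by auto
  then have "u = v \<or> u = y" using xv by (auto simp: doubleton_eq_iff)
  moreover have "t \<noteq> u"
  proof
    assume "t = u"
    then have "{x,v} = {x,y}" using tu(1) by auto
    then show False using \<open>v \<noteq> y\<close> \<open>x \<noteq> v\<close> by (auto simp: doubleton_eq_iff)
  qed
  ultimately have "{t,u} = {v,y}" by auto
  then show "adj E v y" using tu(2) unfolding adj_def by simp
qed

theorem lemma1:
  fixes V :: "'a set" and E :: "'a set set"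
  assumes "simple_graph V E"
    and "wedges V E \<noteq> {}"
  defines "p \<equiv> \<lambda>v. real (card (wedges_at E v)) / real (card (wedges V E))"
  shows "((\<Sum>v\<in>V. if card (wedges_at E v) = 0
              then real (cut E (closed_nbhd V E v)) / real (card (wedges V E))
              else p v * real (cut E (closed_nbhd V E v)) / real (card (wedges_at E v)))
           = 2 * (1 - clustering_coeff V E))
         \<and> (real (\<Sum>v\<in>V. cut E (closed_nbhd V E v))
           = 2 * (1 - clustering_coeff V E) * real (card (wedges V E)))"
proof -
  note G = assms(1)
  have finV: "finite V" using G unfolding simple_graph_def by auto
  have EP: "E \<subseteq> Pow V" using G unfolding simple_graph_def by auto
  have finE: "finite E" using finite_subset[OF EP] finV by auto
  have finWat: "finite (wedges_at E v)" for v
    by (rule finite_subset[of _ "Pow E"]) (auto simp: wedges_at_def finE)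
  have "wedges V E \<subseteq> V \<times> Pow E" unfolding wedges_def wedges_at_def by auto
  then have finW: "finite (wedges V E)" using finV finE by (meson finite_Pow_iff finite_SigmaI finite_subset)
  define Wn where "Wn = card (wedges V E)"
  have Wpos: "Wn > 0" using finW assms(2) Wn_def by (simp add: card_gt_0_iff)
  define Op where "Op = {w \<in> wedges V E. \<not> closed_wedge E w}"
  define C where "C = {w \<in> wedges V E. closed_wedge E w}"
  have WCO: "Wn = card C + card Op"
  proof -
    have "wedges V E = C \<union> Op" "C \<inter> Op = {}" unfolding C_def Op_def by auto
    then show ?thesis unfolding Wn_def using finW
      by (metis card_Un_disjoint finite_Un)
  qed
  define P where "P = {(x,v,y). x \<in> V \<and> v \<in> V \<and> y \<in> V \<and> adj E x v \<and> adj E x y \<and> v \<noteq> y \<and> \<not> adj E v y}"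
  have finP: "finite P"
    by (rule finite_subset[of _ "V \<times> V \<times> V"]) (auto simp: P_def finV)
  define f where "f = (\<lambda>(x::'a,v::'a,y::'a). (x, {{x,v},{x,y}}))"
  define A where "A = (\<lambda>w. {q \<in> P. f q = w})"
  have fib: "card (A w) = 2" if that0: "w \<in> Op" for w
  proof -
    obtain x ww where w: "w = (x, ww)" "x \<in> V" "ww \<in> wedges_at E x" "\<not> closed_wedge E w"
      proof (cases w) case (Pair a b) then show ?thesis using that0[unfolded Op_def wedges_def] by (intro that[of a b]) auto qed
    then obtain e1 e2 where e: "ww = {e1,e2}" "e1 \<in> E" "e2 \<in> E" "e1 \<noteq> e2" "x \<in> e1" "x \<in> e2"
      unfolding wedges_at_def by auto
    obtain t where t: "e1 = {x,t}" "t \<noteq> x" "t \<in> V" using edge_form[OF G e(2) e(5)] by auto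
    obtain u where u: "e2 = {x,u}" "u \<noteq> x" "u \<in> V" using edge_form[OF G e(3) e(6)] by auto
    have tu: "t \<noteq> u" using e(4) t u by auto
    have at: "adj E x t" "adj E x u" using e t u unfolding adj_def by auto
    have nadj: "\<not> adj E t u"
      using w(4) closed_iff[OF G at tu] w(1) e(1) t(1) u(1) by simp
    have "A w = {(x,t,u),(x,u,t)}"
    proof (rule set_eqI, rule iffI)
      fix q assume "q \<in> A w"
      then obtain x' v y where q: "q = (x',v,y)" "(x',v,y) \<in> P" "f (x',v,y) = w"
        unfolding A_def by (cases q) auto
      then have xx: "x' = x" and ww: "{{x,v},{x,y}} = {{x,t},{x,u}}" using w e t u
        unfolding f_def by auto
      have "v \<noteq> x" "y \<noteq> x" using q(2) adj_irrefl[OF G] unfolding P_def xx by auto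
      have vy: "v \<noteq> y" using q(2) unfolding P_def by auto
      have m: "{x,v} \<in> {{x,t},{x,u}}" "{x,y} \<in> {{x,t},{x,u}}" unfolding ww[symmetric] by simp_all
      have "v \<in> {t,u}" using m(1) dbl \<open>v \<noteq> x\<close> by blast
      moreover have "y \<in> {t,u}" using m(2) dbl \<open>y \<noteq> x\<close> by blast
      ultimately show "q \<in> {(x,t,u),(x,u,t)}" using q(1) xx vy by auto
    next
      fix q assume "q \<in> {(x,t,u),(x,u,t)}"
      then show "q \<in> A w"
        unfolding A_def P_def f_def using w e t u at nadj tu adj_sym[of E t u]
        by (auto simp: insert_commute)
    qed
    then show ?thesis using tu by simp
  qed
  have fP: "f ` P \<subseteq> Op"
  proof
    fix w assume "w \<in> f ` P"
    then obtain x v y where q: "(x,v,y) \<in> P" "w = (x, {{x,v},{x,y}})" unfolding f_def by auto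
    have a: "adj E x v" "adj E x y" "v \<noteq> y" "\<not> adj E v y" "x \<in> V" using q(1) unfolding P_def by auto
    have xv: "x \<noteq> v" using a(1) adj_irrefl[OF G] by metis
    have ne: "{x,v} \<noteq> {x,y}" using a(3) dbl xv by metis
    have ed: "{x,v} \<in> E" "{x,y} \<in> E" using a(1,2) unfolding adj_def by auto
    have "{{x,v},{x,y}} \<in> wedges_at E x"
      unfolding wedges_at_def using ed ne by blast
    then show "w \<in> Op" unfolding Op_def wedges_def using q(2) a closed_iff[OF G a(1-3)] by auto
  qed
  have PU: "P = \<Union>(A ` Op)" unfolding A_def using fP by auto
  have cardP: "card P = 2 * card Op"
  proof -
    have finO: "finite Op" using finW unfolding Op_def by auto
    have "card P = (\<Sum>w\<in>Op. card (A w))"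
      unfolding PU by (rule card_UN_disjoint) (auto simp: finO A_def finP)
    also have "\<dots> = (\<Sum>w\<in>Op. 2)" using fib by simp
    finally show ?thesis by simp
  qed
  \<comment> \<open>cut sum equals card P\<close>
  define T where "T = Sigma V (\<lambda>v. {e\<in>E. card (e \<inter> closed_nbhd V E v) = 1})"
  have sumT: "(\<Sum>v\<in>V. cut E (closed_nbhd V E v)) = card T"
    unfolding T_def cut_def using finV finE by (subst card_SigmaI) auto
  define g where "g = (\<lambda>(x::'a,v::'a,y::'a). (v, {x,y}))"
  have inN: "z \<in> closed_nbhd V E v \<longleftrightarrow> z = v \<or> adj E v z" if "v \<in> V" for z v
    using adj_V[OF G] that unfolding closed_nbhd_def by auto
  have injg: "inj_on g P"
  proof (rule inj_onI)
    fix a b assume ab: "a \<in> P" "b \<in> P" "g a = g b"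
    obtain x v y where a: "a = (x,v,y)" by (cases a) auto
    obtain x' v' y' where b: "b = (x',v',y')" by (cases b) auto
    have vv: "v' = v" and s: "{x,y} = {x',y'}" using ab a b unfolding g_def by auto
    have "adj E v x" "\<not> adj E v y" "adj E v x'" "\<not> adj E v y'"
      using ab(1,2) a b vv adj_sym[of E v x] adj_sym[of E v x'] unfolding P_def by auto
    then have "x = x'" "y = y'" using s by (auto simp: doubleton_eq_iff)
    then show "a = b" using a b vv by simp
  qed
  have gP: "g ` P = T"
  proof (rule set_eqI, rule iffI)
    fix q assume "q \<in> g ` P"
    then obtain x v y where q: "(x,v,y) \<in> P" "q = (v, {x,y})" unfolding g_def by auto
    have a: "adj E x v" "adj E x y" "v \<noteq> y" "\<not> adj E v y" "v \<in> V" using q(1) unfolding P_def by auto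
    have "x \<in> closed_nbhd V E v" using inN[OF a(5)] a adj_sym[of E x v] by auto
    moreover have "y \<notin> closed_nbhd V E v" using inN[OF a(5)] a by auto
    moreover have "x \<noteq> y" using a adj_sym[of E v y] by metis
    ultimately have "{x,y} \<inter> closed_nbhd V E v = {x}" by auto
    then show "q \<in> T" unfolding T_def using q(2) a(2,5) unfolding adj_def by auto
  next
    fix q assume "q \<in> T"
    then obtain v e where q: "q = (v,e)" "v \<in> V" "e \<in> E" "card (e \<inter> closed_nbhd V E v) = 1"
      unfolding T_def by auto
    obtain a where a1: "e \<inter> closed_nbhd V E v = {a}" using q(4) card_1_singletonE by blast
    then have "a \<in> e" by auto
    then obtain b where b: "e = {a,b}" "b \<noteq> a" "b \<in> V" "a \<in> V" using edge_form[OF G q(3)] by auto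
    have ain: "a = v \<or> adj E v a" using a1 inN[OF q(2)] by auto
    have bout: "b \<noteq> v" "\<not> adj E v b" using a1 b inN[OF q(2)] by auto
    have ab: "adj E a b" using q(3) b unfolding adj_def by simp
    have "a \<noteq> v"
    proof
      assume "a = v" then show False using ab bout by simp
    qed
    then have "adj E a v" using ain adj_sym[of E a v] by metis
    then have "(a,v,b) \<in> P" unfolding P_def using b q(2) ab bout by auto
    moreover have "g (a,v,b) = q" unfolding g_def using q b by simp
    ultimately show "q \<in> g ` P" by force
  qed
  have cardT: "card T = card P" using card_image[OF injg] gP by simp
  have key: "real (\<Sum>v\<in>V. cut E (closed_nbhd V E v)) = 2 * (real Wn - real (card C))"
    using sumT cardT cardP WCO by simp
  have kap: "clustering_coeff V E = real (card C) / real Wn"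
    unfolding clustering_coeff_def C_def Wn_def by simp
  have second: "real (\<Sum>v\<in>V. cut E (closed_nbhd V E v))
           = 2 * (1 - clustering_coeff V E) * real Wn"
    using key kap Wpos by (simp add: field_simps)
  have "(\<Sum>v\<in>V. if card (wedges_at E v) = 0
              then real (cut E (closed_nbhd V E v)) / real (card (wedges V E))
              else p v * real (cut E (closed_nbhd V E v)) / real (card (wedges_at E v)))
        = (\<Sum>v\<in>V. real (cut E (closed_nbhd V E v)) / real Wn)"
    by (rule sum.cong) (auto simp: p_def Wn_def)
  also have "\<dots> = real (\<Sum>v\<in>V. cut E (closed_nbhd V E v)) / real Wn"
    by (simp add: sum_divide_distrib)
  also have "\<dots> = 2 * (1 - clustering_coeff V E)" using second Wpos by simp
  finally show ?thesis using second Wn_def by simp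
qed

end
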